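(* Fix a tomographically complete measurement $\mu^\diamond$ on $\mathcal X=\mathbb C^n$ with finite outcome set $\mathcal Y$. Let $\Gamma:\mathrm{Dens}(\mathcal X)\to\mathcal R$ be a quantum property and $\Gamma^\diamond:\mathcal P^\diamond\to\mathcal R$ be $\Gamma^\diamond(p)=\Gamma(\phi^+p)$. Then $\Gamma$ is elicitable (by a quantum score) if and only if $\Gamma^\diamond$ is elicitable (by a classical scoring rule on $\mathcal P^\diamond$), and for $\mathcal R\subseteq\mathbb R^k$, $\Gamma$ is identifiable if and only if $\Gamma^\diamond$ is identifiable.
   Context: $\mathrm{Herm}(\mathcal X)$ the Hermitian matrices with $\langle X,Y\rangle=\mathrm{Tr}(X^*Y)$, $\mathrm{Dens}(\mathcal X)$ the density matrices. A measurement $\mu=\{\mu_y\}_{y\in\mathcal Y}$ is a family of positive semidefinite operators with $\sum_y\mu_y=I$; tomographically complete if its real span is $\mathrm{Herm}(\mathcal X)$. Let $\phi:\mathrm{Herm}(\mathcal X)\to\mathbb R^{\mathcal Y}$, $(\phi X)_y=\langle\mu^\diamond_y,X\rangle$ (injective), $\phi^+$ its Moore–Penrose pseudoinverse (a linear left inverse), and $\mathcal P^\diamond=\phi(\mathrm{Dens}(\mathcal X))\subseteq\Delta_{\mathcal Y}$. A quantum property is any map $\Gamma:\mathrm{Dens}(\mathcal X)\to\mathcal R$. A quantum score for reports in $\mathcal R$ is $S=(s,\mu)$ with $s:\mathcal R\times\mathbb N\to\mathbb R$, $\mu:\mathcal R\to$ measurements, expected score $S(r;\rho)=\sum_y\langle\mu(r)_y,\rho\rangle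 s(r,y)$; $S$ elicits $\Gamma$ if $\{\Gamma(\rho)\}=\arg\max_{r}S(r;\rho)$ for all $\rho$. A classical scoring rule $\hat s:\mathcal R\times\mathcal Y\to\mathbb R$ elicits $\Gamma^\diamond$ on $\mathcal P^\diamond$ if $\{\Gamma^\diamond(p)\}=\arg\max_r\sum_yp_y\hat s(r,y)$ for all $p\in\mathcal P^\diamond$. $\Gamma:\mathrm{Dens}(\mathcal X)\to\mathbb R^k$ is identifiable if for each $r$ in its range there is $V(r)\in\mathrm{Herm}(\mathcal X)^k$ with $\Gamma(\rho)=r\iff(\langle V(r)_i,\rho\rangle)_{i=1}^k=0$ for all $\rho$; a classical $\Gamma^\diamond:\mathcal P^\diamond\to\mathbb R^k$ is identifiable if for each $r$ in its range there is $v(r)\in\mathbb R^{k\times\mathcal Y}$ with $\Gamma^\diamond(p)=r\iff v(r)p=0$ for all $p\in\mathcal P^\diamond$. *)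

theory Defs
  imports "HOL-Analysis.Analysis"
begin

text \<open>Operators on X = C^n are modelled as complex n x n matrices indexed by a
finite type 'n (so n = CARD('n) is arbitrary but fixed).\<close>

type_synonym 'n cmat = "complex^'n^'n"

definition cadj :: "'n::finite cmat \<Rightarrow> 'n cmat" where
  "cadj A = (\<chi> i j. cnj (A $ j $ i))"

definition hermitian :: "'n::finite cmat \<Rightarrow> bool" where
  "hermitian A \<longleftrightarrow> cadj A = A"

definition Herm :: "'n::finite cmat set" where
  "Herm = {A. hermitian A}"

definition psd :: "'n::finite cmat \<Rightarrow> bool" where
  "psd A \<longleftrightarrow> hermitian A \<and>
     (\<forall>v::complex^'n. 0 \<le> Re (\<Sum>i\<in>UNIV. cnj (v $ i) * (A *v v) $ i))"

definition Dens :: "'n::finite cmat set" where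
  "Dens = {A. psd A \<and> trace A = 1}"

text \<open>Hilbert-Schmidt inner product <X,Y> = Tr(X^* Y); it is real for Hermitian X, Y.\<close>
definition hs_inner :: "'n::finite cmat \<Rightarrow> 'n cmat \<Rightarrow> real" where
  "hs_inner X Y = Re (trace (cadj X ** Y))"

definition measurement :: "('y::finite \<Rightarrow> 'n::finite cmat) \<Rightarrow> bool" where
  "measurement \<mu> \<longleftrightarrow> (\<forall>y. psd (\<mu> y)) \<and> (\<Sum>y\<in>UNIV. \<mu> y) = mat 1"

definition tomo_complete :: "('y::finite \<Rightarrow> 'n::finite cmat) \<Rightarrow> bool" where
  "tomo_complete \<mu> \<longleftrightarrow> measurement \<mu> \<and> span (range \<mu>) = Herm"

definition phi :: "('y::finite \<Rightarrow> 'n::finite cmat) \<Rightarrow> 'n cmat \<Rightarrow> ('y \<Rightarrow> real)" where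
  "phi \<mu> X = (\<lambda>y. hs_inner (\<mu> y) X)"

text \<open>Moore-Penrose pseudoinverse of phi : Herm(X) \<rightarrow> R^Y (standard inner product on R^Y,
Hilbert-Schmidt inner product on Herm(X)): phi^+ p is the least-squares solution of
minimal norm.\<close>
definition lsq_solutions :: "('y::finite \<Rightarrow> 'n::finite cmat) \<Rightarrow> ('y \<Rightarrow> real) \<Rightarrow> 'n cmat set" where
  "lsq_solutions \<mu> p = {X \<in> Herm. \<forall>Z\<in>Herm.
      (\<Sum>y\<in>UNIV. (phi \<mu> X y - p y)^2) \<le> (\<Sum>y\<in>UNIV. (phi \<mu> Z y - p y)^2)}"

definition phi_pinv :: "('y::finite \<Rightarrow> 'n::finite cmat) \<Rightarrow> ('y \<Rightarrow> real) \<Rightarrow> 'n cmat" where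
  "phi_pinv \<mu> p = (THE X. X \<in> lsq_solutions \<mu> p \<and>
      (\<forall>Z\<in>lsq_solutions \<mu> p. hs_inner X X \<le> hs_inner Z Z))"

definition Pdiam :: "('y::finite \<Rightarrow> 'n::finite cmat) \<Rightarrow> ('y \<Rightarrow> real) set" where
  "Pdiam \<mu> = phi \<mu> ` Dens"

text \<open>Measurements used by quantum scores: outcomes in nat, finitely many nonzero effects.\<close>
definition nat_measurement :: "(nat \<Rightarrow> 'n::finite cmat) \<Rightarrow> bool" where
  "nat_measurement M \<longleftrightarrow> finite {y. M y \<noteq> 0} \<and> (\<forall>y. psd (M y)) \<and>
     (\<Sum>y\<in>{y. M y \<noteq> 0}. M y) = mat 1"

definition qscore_expected ::
  "('r \<Rightarrow> nat \<Rightarrow> real) \<Rightarrow> ('r \<Rightarrow> nat \<Rightarrow> 'n::finite cmat) \<Rightarrow> 'r \<Rightarrow> 'n cmat \<Rightarrow> real" where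
  "qscore_expected s M r \<rho> = (\<Sum>y\<in>{y. M r y \<noteq> 0}. hs_inner (M r y) \<rho> * s r y)"

definition q_elicits ::
  "'r set \<Rightarrow> ('r \<Rightarrow> nat \<Rightarrow> real) \<Rightarrow> ('r \<Rightarrow> nat \<Rightarrow> 'n::finite cmat) \<Rightarrow> ('n cmat \<Rightarrow> 'r) \<Rightarrow> bool" where
  "q_elicits R s M \<Gamma> \<longleftrightarrow> (\<forall>r\<in>R. nat_measurement (M r)) \<and>
     (\<forall>\<rho>\<in>Dens. {\<Gamma> \<rho>} = {r\<in>R. \<forall>r'\<in>R. qscore_expected s M r' \<rho> \<le> qscore_expected s M r \<rho>})"

definition q_elicitable :: "'r set \<Rightarrow> ('n::finite cmat \<Rightarrow> 'r) \<Rightarrow> bool" where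
  "q_elicitable R \<Gamma> \<longleftrightarrow> (\<exists>s M. q_elicits R s M \<Gamma>)"

definition c_elicits ::
  "'r set \<Rightarrow> ('y::finite \<Rightarrow> real) set \<Rightarrow> ('r \<Rightarrow> 'y \<Rightarrow> real) \<Rightarrow> (('y \<Rightarrow> real) \<Rightarrow> 'r) \<Rightarrow> bool" where
  "c_elicits R P s G \<longleftrightarrow> (\<forall>p\<in>P. {G p} =
     {r\<in>R. \<forall>r'\<in>R. (\<Sum>y\<in>UNIV. p y * s r' y) \<le> (\<Sum>y\<in>UNIV. p y * s r y)})"

definition c_elicitable :: "'r set \<Rightarrow> ('y::finite \<Rightarrow> real) set \<Rightarrow> (('y \<Rightarrow> real) \<Rightarrow> 'r) \<Rightarrow> bool" where
  "c_elicitable R P G \<longleftrightarrow> (\<exists>s. c_elicits R P s G)"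

text \<open>Identifiability; R^k is modelled as 'k \<Rightarrow> real for a finite index type 'k.\<close>
definition q_identifiable :: "('n::finite cmat \<Rightarrow> ('k::finite \<Rightarrow> real)) \<Rightarrow> bool" where
  "q_identifiable \<Gamma> \<longleftrightarrow> (\<forall>r\<in>\<Gamma> ` Dens. \<exists>V::'k \<Rightarrow> 'n cmat. (\<forall>i. V i \<in> Herm) \<and>
     (\<forall>\<rho>\<in>Dens. \<Gamma> \<rho> = r \<longleftrightarrow> (\<forall>i. hs_inner (V i) \<rho> = 0)))"

definition c_identifiable :: "('y::finite \<Rightarrow> real) set \<Rightarrow> (('y \<Rightarrow> real) \<Rightarrow> ('k::finite \<Rightarrow> real)) \<Rightarrow> bool" where
  "c_identifiable P G \<longleftrightarrow> (\<forall>r\<in>G ` P. \<exists>v::'k \<Rightarrow> 'y \<Rightarrow> real.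
     \<forall>p\<in>P. G p = r \<longleftrightarrow> (\<forall>i. (\<Sum>y\<in>UNIV. v i y * p y) = 0))"

end

theory Submission
  imports Defs
begin


lemma hs_inner_sum: "hs_inner X Y = (\<Sum>i\<in>UNIV. \<Sum>k\<in>UNIV. Re (cnj (X$k$i) * Y$k$i))"
  unfolding hs_inner_def trace_def cadj_def matrix_matrix_mult_def by (simp add: Re_sum)

lemma hs_add1: "hs_inner (A + B) X = hs_inner A X + hs_inner B X"
  by (simp add: hs_inner_sum sum.distrib ring_distribs)
lemma hs_scale1: "hs_inner (c *\<^sub>R A) X = c * hs_inner A X"
  by (simp add: hs_inner_sum sum_distrib_left algebra_simps)
lemma hs_zero1: "hs_inner 0 X = 0"
  by (simp add: hs_inner_sum)
lemma hs_sum1: "hs_inner (\<Sum>y\<in>S. f y) X = (\<Sum>y\<in>S. hs_inner (f y) X)"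
  by (induct S rule: infinite_finite_induct) (simp_all add: hs_add1 hs_zero1)
lemma hs_diff2: "hs_inner A (X - Y) = hs_inner A X - hs_inner A Y"
  by (simp add: hs_inner_sum sum_subtractf ring_distribs)
lemma hs_self0: "hs_inner X X = 0 \<Longrightarrow> X = 0"
proof -
  assume h: "hs_inner X X = 0"
  have nn: "\<And>z::complex. Re (cnj z * z) = (cmod z)^2"
    by (simp add: cmod_power2 flip: power2_eq_square)
  have "\<forall>i\<in>UNIV. \<forall>k\<in>UNIV. Re (cnj (X$k$i) * X$k$i) = 0"
  proof -
    have "(\<Sum>i\<in>UNIV. \<Sum>k\<in>UNIV. Re (cnj (X$k$i) * X$k$i)) = 0" using h by (simp add: hs_inner_sum)
    then have "\<forall>i\<in>UNIV. (\<Sum>k\<in>UNIV. Re (cnj (X$k$i) * X$k$i)) = 0"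
      by (subst (asm) sum_nonneg_eq_0_iff) (auto intro!: sum_nonneg simp: nn)
    then show ?thesis
      by (auto simp: nn sum_nonneg_eq_0_iff)
  qed
  then show "X = 0" by (simp add: nn vec_eq_iff complex_eq_iff)
qed

lemma psd0: "psd 0"
  unfolding psd_def hermitian_def cadj_def by (simp add: vec_eq_iff)


context
  fixes \<mu> :: "'y::finite \<Rightarrow> 'n::finite cmat"
  assumes tc: "tomo_complete \<mu>"
begin

lemma Herm_span: "Herm = span (range \<mu>)" using tc by (simp add: tomo_complete_def)

lemma Herm_repr: "X \<in> Herm \<Longrightarrow> \<exists>c. X = (\<Sum>y\<in>UNIV. c y *\<^sub>R \<mu> y)"
proof -
  let ?T = "{X. \<exists>c. X = (\<Sum>y\<in>UNIV. c y *\<^sub>R \<mu> y)}"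
  have sub: "subspace ?T"
    unfolding subspace_def
  proof (intro conjI ballI allI)
    show "0 \<in> ?T" by (rule CollectI, rule exI[of _ "\<lambda>_. 0"]) simp
  next
    fix x y assume "x \<in> ?T" "y \<in> ?T"
    then obtain a b where "x = (\<Sum>y\<in>UNIV. a y *\<^sub>R \<mu> y)" "y = (\<Sum>y\<in>UNIV. b y *\<^sub>R \<mu> y)" by auto
    then show "x + y \<in> ?T"
      by (intro CollectI exI[of _ "\<lambda>y. a y + b y"]) (simp add: sum.distrib scaleR_add_left)
  next
    fix c and x :: "'n cmat" assume "x \<in> ?T"
    then obtain a where "x = (\<Sum>y\<in>UNIV. a y *\<^sub>R \<mu> y)" by auto
    then show "c *\<^sub>R x \<in> ?T"
      by (intro CollectI exI[of _ "\<lambda>y. c * a y"]) (simp add: scaleR_sum_right)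
  qed
  have "range \<mu> \<subseteq> ?T"
  proof
    fix x assume "x \<in> range \<mu>"
    then obtain z where z: "x = \<mu> z" by auto
    show "x \<in> ?T"
      by (rule CollectI, rule exI[of _ "\<lambda>y. if y = z then 1 else 0"])
         (simp add: z if_distrib[of "\<lambda>c. c *\<^sub>R _"] sum.delta cong: if_cong)
  qed
  from span_minimal[OF this sub] Herm_span show "X \<in> Herm \<Longrightarrow> ?thesis" by auto
qed

lemma comb_Herm: "(\<Sum>y\<in>UNIV. c y *\<^sub>R \<mu> y) \<in> Herm"
  unfolding Herm_span by (intro span_sum span_scale span_base) auto

lemma mu_Herm: "\<mu> y \<in> Herm"
  unfolding Herm_span by (intro span_base) auto

lemma Dens_Herm: "\<rho> \<in> Dens \<Longrightarrow> \<rho> \<in> Herm"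
  by (simp add: Dens_def psd_def Herm_def)

lemma inj_phi: "X \<in> Herm \<Longrightarrow> Y \<in> Herm \<Longrightarrow> phi \<mu> X = phi \<mu> Y \<Longrightarrow> X = Y"
proof -
  assume X: "X \<in> Herm" and Y: "Y \<in> Herm" and e: "phi \<mu> X = phi \<mu> Y"
  have D: "X - Y \<in> Herm" using X Y unfolding Herm_span by (rule span_diff)
  then obtain c where c: "X - Y = (\<Sum>y\<in>UNIV. c y *\<^sub>R \<mu> y)" using Herm_repr by blast
  have z: "\<And>y. hs_inner (\<mu> y) (X - Y) = 0" using e
    by (simp add: hs_diff2 phi_def fun_eq_iff)
  have "hs_inner (X - Y) (X - Y) = 0"
    by (subst (1) c) (simp add: hs_sum1 hs_scale1 z)
  then have "X - Y = 0" by (rule hs_self0)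
  then show "X = Y" by simp
qed

lemma pinv_phi: "\<rho> \<in> Dens \<Longrightarrow> phi_pinv \<mu> (phi \<mu> \<rho>) = \<rho>"
proof -
  assume r: "\<rho> \<in> Dens"
  hence rH: "\<rho> \<in> Herm" by (rule Dens_Herm)
  have L: "lsq_solutions \<mu> (phi \<mu> \<rho>) = {\<rho>}"
  proof
    show "{\<rho>} \<subseteq> lsq_solutions \<mu> (phi \<mu> \<rho>)"
      using rH by (auto simp: lsq_solutions_def intro!: sum_nonneg)
  next
    show "lsq_solutions \<mu> (phi \<mu> \<rho>) \<subseteq> {\<rho>}"
    proof
      fix X assume "X \<in> lsq_solutions \<mu> (phi \<mu> \<rho>)"
      then have XH: "X \<in> Herm" and le: "(\<Sum>y\<in>UNIV. (phi \<mu> X y - phi \<mu> \<rho> y)^2) \<le> 0"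
        using rH unfolding lsq_solutions_def by auto
      have "(\<Sum>y\<in>UNIV. (phi \<mu> X y - phi \<mu> \<rho> y)^2) = 0"
        using le by (intro antisym sum_nonneg) auto
      then have "\<forall>y\<in>UNIV. (phi \<mu> X y - phi \<mu> \<rho> y)^2 = 0"
        by (subst (asm) sum_nonneg_eq_0_iff) auto
      then have "phi \<mu> X = phi \<mu> \<rho>" by (auto simp: fun_eq_iff)
      then show "X \<in> {\<rho>}" using inj_phi XH rH by auto
    qed
  qed
  show ?thesis unfolding phi_pinv_def L by (rule the_equality) auto
qed

lemma hs_comb: "hs_inner (\<Sum>y\<in>UNIV. c y *\<^sub>R \<mu> y) \<rho> = (\<Sum>y\<in>UNIV. phi \<mu> \<rho> y * c y)"
  by (simp add: hs_sum1 hs_scale1 phi_def mult.commute)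


lemma G_phi: "\<rho> \<in> Dens \<Longrightarrow> (\<lambda>p. \<Gamma> (phi_pinv \<mu> p)) (phi \<mu> \<rho>) = \<Gamma> \<rho>"
  by (simp add: pinv_phi)

lemma Pdiam_E: "p \<in> Pdiam \<mu> \<Longrightarrow> (\<And>\<rho>. \<rho> \<in> Dens \<Longrightarrow> p = phi \<mu> \<rho> \<Longrightarrow> P) \<Longrightarrow> P"
  unfolding Pdiam_def by auto

lemma ident_iff:
  fixes \<Gamma> :: "'n cmat \<Rightarrow> ('k::finite \<Rightarrow> real)"
  shows "q_identifiable \<Gamma> \<longleftrightarrow> c_identifiable (Pdiam \<mu>) (\<lambda>p. \<Gamma> (phi_pinv \<mu> p))"
proof
  assume q: "q_identifiable \<Gamma>"
  show "c_identifiable (Pdiam \<mu>) (\<lambda>p. \<Gamma> (phi_pinv \<mu> p))"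
    unfolding c_identifiable_def
  proof
    fix r assume "r \<in> (\<lambda>p. \<Gamma> (phi_pinv \<mu> p)) ` Pdiam \<mu>"
    then obtain \<rho> where \<rho>: "\<rho> \<in> Dens" "r = \<Gamma> \<rho>" unfolding Pdiam_def by (auto simp: pinv_phi)
    then obtain V :: "'k \<Rightarrow> 'n cmat" where VH: "\<forall>i. V i \<in> Herm"
      and V: "\<forall>\<rho>'\<in>(Dens::'n cmat set). \<Gamma> \<rho>' = r \<longleftrightarrow> (\<forall>i. hs_inner (V i) \<rho>' = 0)"
      using q unfolding q_identifiable_def by blast
    have "\<forall>i. \<exists>c. V i = (\<Sum>y\<in>UNIV. c y *\<^sub>R \<mu> y)" using VH Herm_repr by blast
    then obtain c where c: "\<And>i. V i = (\<Sum>y\<in>UNIV. c i y *\<^sub>R \<mu> y)" by metis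
    show "\<exists>v::'k \<Rightarrow> 'y \<Rightarrow> real. \<forall>p\<in>Pdiam \<mu>. \<Gamma> (phi_pinv \<mu> p) = r \<longleftrightarrow> (\<forall>i. (\<Sum>y\<in>UNIV. v i y * p y) = 0)"
    proof (rule exI[of _ c], intro ballI)
      fix p assume "p \<in> Pdiam \<mu>"
      then obtain \<rho>' where r': "\<rho>' \<in> Dens" "p = phi \<mu> \<rho>'" by (rule Pdiam_E)
      show "\<Gamma> (phi_pinv \<mu> p) = r \<longleftrightarrow> (\<forall>i. (\<Sum>y\<in>UNIV. c i y * p y) = 0)"
        using V r' by (simp add: pinv_phi c hs_comb mult.commute)
    qed
  qed
next
  assume cI: "c_identifiable (Pdiam \<mu>) (\<lambda>p. \<Gamma> (phi_pinv \<mu> p))"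
  show "q_identifiable \<Gamma>"
    unfolding q_identifiable_def
  proof
    fix r assume "r \<in> \<Gamma> ` Dens"
    then obtain \<rho> where \<rho>: "\<rho> \<in> Dens" "r = \<Gamma> \<rho>" by auto
    then have "r \<in> (\<lambda>p. \<Gamma> (phi_pinv \<mu> p)) ` Pdiam \<mu>"
      unfolding Pdiam_def by (auto simp: pinv_phi intro!: image_eqI[of _ _ "phi \<mu> \<rho>"])
    then obtain v :: "'k \<Rightarrow> 'y \<Rightarrow> real" where
      v: "\<forall>p\<in>Pdiam \<mu>. \<Gamma> (phi_pinv \<mu> p) = r \<longleftrightarrow> (\<forall>i. (\<Sum>y\<in>UNIV. v i y * p y) = 0)"
      using cI unfolding c_identifiable_def by blast
    show "\<exists>V::'k \<Rightarrow> 'n cmat. (\<forall>i. V i \<in> Herm) \<and> (\<forall>\<rho>\<in>Dens. \<Gamma> \<rho> = r \<longleftrightarrow> (\<forall>i. hs_inner (V i) \<rho> = 0))"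
    proof (rule exI[of _ "\<lambda>i. \<Sum>y\<in>UNIV. v i y *\<^sub>R \<mu> y"], intro conjI allI ballI)
      fix i show "(\<Sum>y\<in>UNIV. v i y *\<^sub>R \<mu> y) \<in> Herm" by (rule comb_Herm)
    next
      fix \<rho>' :: "'n cmat" assume r': "\<rho>' \<in> Dens"
      then have "phi \<mu> \<rho>' \<in> Pdiam \<mu>" by (simp add: Pdiam_def)
      with v have "\<Gamma> (phi_pinv \<mu> (phi \<mu> \<rho>')) = r \<longleftrightarrow> (\<forall>i. (\<Sum>y\<in>UNIV. v i y * phi \<mu> \<rho>' y) = 0)" by blast
      with r' show "\<Gamma> \<rho>' = r \<longleftrightarrow> (\<forall>i. hs_inner (\<Sum>y\<in>UNIV. v i y *\<^sub>R \<mu> y) \<rho>' = 0)"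
        by (simp add: pinv_phi hs_comb mult.commute)
    qed
  qed
qed


lemma qscore_lin: "qscore_expected s M r \<rho> = hs_inner (\<Sum>n\<in>{y. M r y \<noteq> 0}. s r n *\<^sub>R M r n) \<rho>"
  by (simp add: qscore_expected_def hs_sum1 hs_scale1 mult.commute)

lemma psd_Herm: "psd A \<Longrightarrow> A \<in> Herm"
  by (simp add: psd_def Herm_def)

lemma elic_iff:
  fixes R :: "'r set" and \<Gamma> :: "'n cmat \<Rightarrow> 'r"
  assumes GR: "\<Gamma> ` Dens \<subseteq> R"
  shows "q_elicitable R \<Gamma> \<longleftrightarrow> c_elicitable R (Pdiam \<mu>) (\<lambda>p. \<Gamma> (phi_pinv \<mu> p))"
proof
  assume "q_elicitable R \<Gamma>"
  then obtain s M where q: "q_elicits R s M \<Gamma>" unfolding q_elicitable_def by blast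
  have "\<forall>r\<in>R. \<exists>c. \<forall>\<rho>. qscore_expected s M r \<rho> = (\<Sum>y\<in>UNIV. phi \<mu> \<rho> y * c y)"
  proof
    fix r assume "r \<in> R"
    then have nm: "nat_measurement (M r)" using q by (simp add: q_elicits_def)
    have "(\<Sum>n\<in>{y. M r y \<noteq> 0}. s r n *\<^sub>R M r n) \<in> Herm"
      unfolding Herm_span
    proof (intro span_sum span_scale)
      fix n show "M r n \<in> span (range \<mu>)"
        using nm psd_Herm Herm_span by (auto simp: nat_measurement_def)
    qed
    then obtain c where "(\<Sum>n\<in>{y. M r y \<noteq> 0}. s r n *\<^sub>R M r n) = (\<Sum>y\<in>UNIV. c y *\<^sub>R \<mu> y)"
      using Herm_repr by blast
    then show "\<exists>c. \<forall>\<rho>. qscore_expected s M r \<rho> = (\<Sum>y\<in>UNIV. phi \<mu> \<rho> y * c y)"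
      by (intro exI[of _ c]) (simp add: qscore_lin hs_comb)
  qed
  then obtain c where c: "\<And>r \<rho>. r \<in> R \<Longrightarrow> qscore_expected s M r \<rho> = (\<Sum>y\<in>UNIV. phi \<mu> \<rho> y * c r y)"
    by metis
  show "c_elicitable R (Pdiam \<mu>) (\<lambda>p. \<Gamma> (phi_pinv \<mu> p))"
    unfolding c_elicitable_def c_elicits_def
  proof (intro exI[of _ c] ballI)
    fix p assume "p \<in> Pdiam \<mu>"
    then obtain \<rho> where r: "\<rho> \<in> Dens" "p = phi \<mu> \<rho>" by (rule Pdiam_E)
    have "{\<Gamma> \<rho>} = {r\<in>R. \<forall>r'\<in>R. qscore_expected s M r' \<rho> \<le> qscore_expected s M r \<rho>}"
      using q r by (simp add: q_elicits_def)
    also have "\<dots> = {r\<in>R. \<forall>r'\<in>R. (\<Sum>y\<in>UNIV. p y * c r' y) \<le> (\<Sum>y\<in>UNIV. p y * c r y)}"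
      using r c by auto
    finally show "{\<Gamma> (phi_pinv \<mu> p)} = {r\<in>R. \<forall>r'\<in>R. (\<Sum>y\<in>UNIV. p y * c r' y) \<le> (\<Sum>y\<in>UNIV. p y * c r y)}"
      using r by (simp add: pinv_phi)
  qed
next
  assume "c_elicitable R (Pdiam \<mu>) (\<lambda>p. \<Gamma> (phi_pinv \<mu> p))"
  then obtain sh where ce: "c_elicits R (Pdiam \<mu>) sh (\<lambda>p. \<Gamma> (phi_pinv \<mu> p))"
    unfolding c_elicitable_def by blast
  obtain f :: "'y \<Rightarrow> nat" where "bij_betw f UNIV {0..<card (UNIV::'y set)}"
    using ex_bij_betw_finite_nat[of "UNIV::'y set"] by auto
  then have inj: "inj f" by (simp add: bij_betw_def)
  define M :: "'r \<Rightarrow> nat \<Rightarrow> 'n cmat" where "M = (\<lambda>r n. if n \<in> range f then \<mu> (inv f n) else 0)"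
  define s :: "'r \<Rightarrow> nat \<Rightarrow> real" where "s = (\<lambda>r n. sh r (inv f n))"
  have meas: "measurement \<mu>" using tc by (simp add: tomo_complete_def)
  have sup: "\<And>r. {y. M r y \<noteq> 0} \<subseteq> range f" by (auto simp: M_def)
  have fin: "finite (range f)" by simp
  have Mf: "\<And>r y. M r (f y) = \<mu> y" using inj by (simp add: M_def)
  have nm: "\<And>r. nat_measurement (M r)"
  proof -
    fix r
    have "(\<Sum>y\<in>{y. M r y \<noteq> 0}. M r y) = (\<Sum>y\<in>range f. M r y)"
      by (rule sum.mono_neutral_left[OF fin sup]) auto
    also have "\<dots> = (\<Sum>y\<in>UNIV. M r (f y))" by (simp add: sum.reindex[OF inj])
    also have "\<dots> = mat 1" using meas by (simp add: Mf measurement_def)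
    finally show "nat_measurement (M r)"
      unfolding nat_measurement_def using meas finite_subset[OF sup fin]
      by (auto simp: M_def psd0 measurement_def)
  qed
  have qs: "\<And>r \<rho>. qscore_expected s M r \<rho> = (\<Sum>y\<in>UNIV. phi \<mu> \<rho> y * sh r y)"
  proof -
    fix r \<rho>
    have "qscore_expected s M r \<rho> = (\<Sum>n\<in>range f. hs_inner (M r n) \<rho> * s r n)"
      unfolding qscore_expected_def
      by (rule sum.mono_neutral_left[OF fin sup]) (auto simp: hs_zero1)
    also have "\<dots> = (\<Sum>y\<in>UNIV. hs_inner (M r (f y)) \<rho> * s r (f y))" by (simp add: sum.reindex[OF inj])
    also have "\<dots> = (\<Sum>y\<in>UNIV. phi \<mu> \<rho> y * sh r y)" using inj by (simp add: Mf s_def phi_def)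
    finally show "qscore_expected s M r \<rho> = (\<Sum>y\<in>UNIV. phi \<mu> \<rho> y * sh r y)" .
  qed
  show "q_elicitable R \<Gamma>"
    unfolding q_elicitable_def q_elicits_def
  proof (intro exI[of _ s] exI[of _ M] conjI ballI)
    fix r show "nat_measurement (M r)" by (rule nm)
  next
    fix \<rho> :: "'n cmat" assume r: "\<rho> \<in> Dens"
    then have "phi \<mu> \<rho> \<in> Pdiam \<mu>" by (simp add: Pdiam_def)
    with ce have "{\<Gamma> (phi_pinv \<mu> (phi \<mu> \<rho>))} = {r\<in>R. \<forall>r'\<in>R. (\<Sum>y\<in>UNIV. phi \<mu> \<rho> y * sh r' y) \<le> (\<Sum>y\<in>UNIV. phi \<mu> \<rho> y * sh r y)}"
      unfolding c_elicits_def by blast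
    with r show "{\<Gamma> \<rho>} = {r\<in>R. \<forall>r'\<in>R. qscore_expected s M r' \<rho> \<le> qscore_expected s M r \<rho>}"
      by (simp add: pinv_phi qs)
  qed
qed

end

theorem proposition6p2:
  fixes \<mu> :: "'y::finite \<Rightarrow> 'n::finite cmat"
  assumes "tomo_complete \<mu>"
  shows "(\<forall>(R::'r set) (\<Gamma>::'n cmat \<Rightarrow> 'r). \<Gamma> ` Dens \<subseteq> R \<longrightarrow>
            (q_elicitable R \<Gamma> \<longleftrightarrow> c_elicitable R (Pdiam \<mu>) (\<lambda>p. \<Gamma> (phi_pinv \<mu> p))))
       \<and> (\<forall>\<Gamma>::'n cmat \<Rightarrow> ('k::finite \<Rightarrow> real).
            q_identifiable \<Gamma> \<longleftrightarrow> c_identifiable (Pdiam \<mu>) (\<lambda>p. \<Gamma> (phi_pinv \<mu> p)))"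
  proof -
  show ?thesis using elic_iff[OF assms] ident_iff[OF assms] by blast
qed

end
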